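(* Let $\tau$ be a smooth function on $S^1$ and let $\ell>0$. Let $\tau^\circ=\int_{S^1}\tau\,ds$, where $s$ is the unit coordinate on $S^1$. If $\tau^\circ\neq0$, let $\Psi=\ell\tau^\circ$. Then there is a smooth embedding $\iota:S^1\to\mathcal K_\Psi$ such that $\iota(S^1)$ is a spacelike curve whose induced metric $g$ and second fundamental form $K$ satisfy $\iota^*g=g_\ell$ and $\iota^*K=\tau\,g_\ell$. If $\tau^\circ=0$, then there exist $L>0$ and a smooth embedding $\iota:S^1\to\mathcal C_L$ such that $\iota(S^1)$ is a spacelike curve whose induced metric $g$ and second fundamental form $K$ satisfy $\iota^*g=g_\ell$ and $\iota^*K=\tau\,g_\ell$.
   Context: $S^1=\mathbb{R}/\mathbb{Z}$ with unit coordinate $s$ (so $\int_{S^1}ds=1$), and $g_\ell=\ell^2ds^2$. $\mathbb{R}^{1,1}$ is $\mathbb{R}^2$ with coordinates $(t,x)$, metric $-dt^2+dx^2$, time-oriented by $\partial_t$; $I_\pm=\{\pm t>|x|\}$. For $\Psi\neq0$, $B_\Psi$ is the linear boost with matrix $\begin{pmatrix}\cosh\Psi&\sinh\Psi\\ \sinh\Psi&\cosh\Psi\end{pmatrix}$; the Kasner surface $\mathcal K_\Psi$ is $I_+/\langle B_\Psi\rangle$ if $\Psi>0$ and $I_-/\langle B_\Psi\rangle$ if $\Psi<0$, with the inherited time-oriented Lorentzian metric. For $L>0$, the flat Lorentzian cylinder is $\mathcal C_L=\mathbb{R}^{1,1}/\langle(t,x)\mapsto(t,x+L)\rangle$. For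 a spacelike curve, the induced second fundamental form is $K(X,Y)=-\langle n,\nabla_XY\rangle$ with $n$ the future-pointing unit normal. *)

theory Defs
  imports "HOL-Analysis.Analysis"
begin

text \<open>Points of R^{1,1} are pairs (t,x).  Functions on S^1 = R/Z are 1-periodic functions on R;
  maps S^1 -> quotient are described by lifts R -> R^2 that are equivariant w.r.t. a deck transformation.\<close>

definition smooth :: "(real \<Rightarrow> 'a::real_normed_vector) \<Rightarrow> bool" where
  "smooth f \<longleftrightarrow> (\<exists>D :: nat \<Rightarrow> real \<Rightarrow> 'a. D 0 = f \<and>
      (\<forall>n x. (D n has_vector_derivative D (Suc n) x) (at x)))"

definition mink :: "real \<times> real \<Rightarrow> real \<times> real \<Rightarrow> real" where
  "mink v w = - fst v * fst w + snd v * snd w"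

definition Iplus :: "(real \<times> real) set" where
  "Iplus = {p. fst p > \<bar>snd p\<bar>}"

definition Iminus :: "(real \<times> real) set" where
  "Iminus = {p. - fst p > \<bar>snd p\<bar>}"

definition boost :: "real \<Rightarrow> real \<times> real \<Rightarrow> real \<times> real" where
  "boost \<Psi> p = (cosh \<Psi> * fst p + sinh \<Psi> * snd p, sinh \<Psi> * fst p + cosh \<Psi> * snd p)"

text \<open>B_Psi^k = boost (k * Psi).\<close>

definition fut_unit_normal :: "real \<times> real \<Rightarrow> real \<times> real" where
  "fut_unit_normal v = (THE n. mink n n = -1 \<and> mink n v = 0 \<and> fst n > 0)"

definition vel :: "(real \<Rightarrow> real \<times> real) \<Rightarrow> real \<Rightarrow> real \<times> real" where
  "vel \<gamma> s = vector_derivative \<gamma> (at s)"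

definition acc :: "(real \<Rightarrow> real \<times> real) \<Rightarrow> real \<Rightarrow> real \<times> real" where
  "acc \<gamma> s = vector_derivative (vel \<gamma>) (at s)"

text \<open>Smooth embedding S^1 -> K_Psi, given by a lift gamma : R -> I_(+/-) with
  gamma(s+1) = B_Psi^k gamma(s); injectivity on the quotient; immersion.\<close>
definition kasner_embedding :: "real \<Rightarrow> (real \<Rightarrow> real \<times> real) \<Rightarrow> bool" where
  "kasner_embedding \<Psi> \<gamma> \<longleftrightarrow> smooth \<gamma>
     \<and> (\<forall>s. \<gamma> s \<in> (if \<Psi> > 0 then Iplus else Iminus))
     \<and> (\<exists>k::int. \<forall>s. \<gamma> (s + 1) = boost (of_int k * \<Psi>) (\<gamma> s))
     \<and> (\<forall>s s'. (\<exists>m::int. \<gamma> s = boost (of_int m * \<Psi>) (\<gamma> s')) \<longrightarrow> s - s' \<in> \<int>)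
     \<and> (\<forall>s. vel \<gamma> s \<noteq> 0)"

text \<open>Smooth embedding S^1 -> C_L, given by a lift gamma : R -> R^2.\<close>
definition cylinder_embedding :: "real \<Rightarrow> (real \<Rightarrow> real \<times> real) \<Rightarrow> bool" where
  "cylinder_embedding L \<gamma> \<longleftrightarrow> smooth \<gamma>
     \<and> (\<exists>k::int. \<forall>s. \<gamma> (s + 1) = \<gamma> s + (0, of_int k * L))
     \<and> (\<forall>s s'. (\<exists>m::int. \<gamma> s = \<gamma> s' + (0, of_int m * L)) \<longrightarrow> s - s' \<in> \<int>)
     \<and> (\<forall>s. vel \<gamma> s \<noteq> 0)"

text \<open>Spacelike, iota^* g = l^2 ds^2, iota^* K = tau * l^2 ds^2 with K(X,Y) = -<n, nabla_X Y>.\<close>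
definition curve_data :: "real \<Rightarrow> (real \<Rightarrow> real) \<Rightarrow> (real \<Rightarrow> real \<times> real) \<Rightarrow> bool" where
  "curve_data l \<tau> \<gamma> \<longleftrightarrow> (\<forall>s. mink (vel \<gamma> s) (vel \<gamma> s) > 0
     \<and> mink (vel \<gamma> s) (vel \<gamma> s) = l^2
     \<and> - mink (fut_unit_normal (vel \<gamma> s)) (acc \<gamma> s) = \<tau> s * l^2)"

definition mean_S1 :: "(real \<Rightarrow> real) \<Rightarrow> real" where
  "mean_S1 \<tau> = integral {0..1} \<tau>"

end

theory Submission
  imports Defs
begin

lemma sinh_r: "sinh (x::real) = (exp x - exp (-x)) / 2" by (simp add: sinh_def)
lemma cosh_r: "cosh (x::real) = (exp x + exp (-x)) / 2" by (simp add: cosh_def)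

lemma smooth_coinduct:
  fixes S :: "(real \<Rightarrow> 'a::real_normed_vector) set"
  assumes S: "\<And>f. f \<in> S \<Longrightarrow> \<exists>g\<in>S. \<forall>x. (f has_vector_derivative g x) (at x)"
    and f: "f \<in> S"
  shows "smooth f"
proof -
  obtain d where d: "\<And>f. f \<in> S \<Longrightarrow> d f \<in> S \<and> (\<forall>x. (f has_vector_derivative d f x) (at x))"
    using S by metis
  have mem: "(d ^^ n) f \<in> S" for n
    by (induction n) (auto simp: f d)
  show ?thesis unfolding smooth_def
    by (rule exI[of _ "\<lambda>n. (d ^^ n) f"]) (use mem d in auto)
qed

lemma smooth_from_deriv:
  fixes f :: "real \<Rightarrow> 'a::real_normed_vector"
  assumes "\<And>x. (f has_vector_derivative f' x) (at x)" and "smooth f'"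
  shows "smooth f"
proof -
  obtain D where D: "D 0 = f'" "\<And>n x. (D n has_vector_derivative D (Suc n) x) (at x)"
    using assms(2) unfolding smooth_def by blast
  show ?thesis unfolding smooth_def
  proof (rule exI[of _ "\<lambda>n. case n of 0 \<Rightarrow> f | Suc m \<Rightarrow> D m"], intro conjI allI)
    fix n x
    show "((case n of 0 \<Rightarrow> f | Suc m \<Rightarrow> D m) has_vector_derivative (case Suc n of 0 \<Rightarrow> f | Suc m \<Rightarrow> D m) x) (at x)"
      using D assms(1) by (cases n) auto
  qed simp
qed

lemma smooth_pair:
  fixes f g :: "real \<Rightarrow> real"
  assumes "smooth f" "smooth g"
  shows "smooth (\<lambda>s. (f s, g s))"
proof -
  obtain D where D: "D 0 = f" "\<And>n x. (D n has_vector_derivative D (Suc n) x) (at x)"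
    using assms(1) unfolding smooth_def by blast
  obtain E where E: "E 0 = g" "\<And>n x. (E n has_vector_derivative E (Suc n) x) (at x)"
    using assms(2) unfolding smooth_def by blast
  show ?thesis unfolding smooth_def
    by (rule exI[of _ "\<lambda>n s. (D n s, E n s)"]) (auto simp: D E intro!: has_vector_derivative_Pair)
qed

inductive_set alg :: "(nat \<Rightarrow> real \<Rightarrow> real) \<Rightarrow> (real \<Rightarrow> real) \<Rightarrow> (real \<Rightarrow> real) set"
  for Dt th where
  const: "(\<lambda>s. c) \<in> alg Dt th"
| der: "Dt n \<in> alg Dt th"
| ep: "(\<lambda>s. exp (th s)) \<in> alg Dt th"
| em: "(\<lambda>s. exp (- th s)) \<in> alg Dt th"
| add: "f \<in> alg Dt th \<Longrightarrow> g \<in> alg Dt th \<Longrightarrow> (\<lambda>s. f s + g s) \<in> alg Dt th"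
| mult: "f \<in> alg Dt th \<Longrightarrow> g \<in> alg Dt th \<Longrightarrow> (\<lambda>s. f s * g s) \<in> alg Dt th"

lemma alg_deriv:
  assumes Dt: "\<And>n x. (Dt n has_real_derivative Dt (Suc n) x) (at x)"
    and th: "\<And>x. (th has_real_derivative l * Dt 0 x) (at x)"
    and "f \<in> alg Dt th"
  shows "\<exists>g\<in>alg Dt th. \<forall>x. (f has_real_derivative g x) (at x)"
  using assms(3)
proof induction
  case (const c)
  then show ?case by (intro bexI[OF _ alg.const[of 0]]) auto
next
  case (der n)
  then show ?case using Dt by (intro bexI[OF _ alg.der[of _ "Suc n"]]) auto
next
  case ep
  have m: "(\<lambda>s. (l * Dt 0 s) * exp (th s)) \<in> alg Dt th"
    by (intro alg.mult alg.ep alg.const alg.der)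
  show ?case
    apply (rule bexI[OF _ m], intro allI)
    using DERIV_chain2[OF DERIV_exp th] by (simp add: mult.commute)
next
  case em
  have m: "(\<lambda>s. ((- l) * Dt 0 s) * exp (- th s)) \<in> alg Dt th"
    by (intro alg.mult alg.em alg.const alg.der)
  show ?case
    apply (rule bexI[OF _ m], intro allI)
    using DERIV_chain2[OF DERIV_exp DERIV_minus[OF th]] by (simp add: mult.commute)
next
  case (add f g)
  then obtain f' g' where "f' \<in> alg Dt th" "g' \<in> alg Dt th"
    "\<forall>x. (f has_real_derivative f' x) (at x)" "\<forall>x. (g has_real_derivative g' x) (at x)" by blast
  then show ?case
    by (intro bexI[OF _ alg.add[of f' _ _ g']]) (auto intro!: DERIV_add)
next
  case (mult f g)
  then obtain f' g' where h: "f' \<in> alg Dt th" "g' \<in> alg Dt th"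
    "\<forall>x. (f has_real_derivative f' x) (at x)" "\<forall>x. (g has_real_derivative g' x) (at x)" by blast
  have m: "(\<lambda>s. f' s * g s + f s * g' s) \<in> alg Dt th"
    using h mult by (intro alg.add alg.mult) auto
  show ?case
  proof (rule bexI[OF _ m], intro allI)
    fix x
    have "((\<lambda>s. f s * g s) has_real_derivative f' x * g x + g' x * f x) (at x)"
      using h(3,4) by (intro DERIV_mult) auto
    thus "((\<lambda>s. f s * g s) has_real_derivative f' x * g x + f x * g' x) (at x)"
      by (simp add: mult.commute)
  qed
qed

lemma alg_smooth:
  assumes Dt: "\<And>n x. (Dt n has_real_derivative Dt (Suc n) x) (at x)"
    and th: "\<And>x. (th has_real_derivative l * Dt 0 x) (at x)"
    and "f \<in> alg Dt th"
  shows "smooth f"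
proof (rule smooth_coinduct[of "alg Dt th"])
  fix f assume "f \<in> alg Dt th"
  from alg_deriv[OF Dt th this] obtain g where "g \<in> alg Dt th" "\<forall>x. (f has_real_derivative g x) (at x)"
    by blast
  thus "\<exists>g\<in>alg Dt th. \<forall>x. (f has_vector_derivative g x) (at x)"
    unfolding has_real_derivative_iff_has_vector_derivative by blast
qed (rule assms(3))


lemma normal_eq:
  assumes "(l::real) > 0"
  shows "fut_unit_normal (l * sinh a, l * cosh a) = (cosh a, sinh a)"
  unfolding fut_unit_normal_def
proof (rule the_equality)
  show "mink (cosh a, sinh a) (cosh a, sinh a) = - 1 \<and> mink (cosh a, sinh a) (l * sinh a, l * cosh a) = 0 \<and> 0 < fst (cosh a, sinh a)"
    using cosh_square_eq[of a] by (simp add: mink_def power2_eq_square algebra_simps)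
next
  fix n :: "real \<times> real"
  assume h: "mink n n = - 1 \<and> mink n (l * sinh a, l * cosh a) = 0 \<and> 0 < fst n"
  obtain p q where n: "n = (p, q)" by (cases n)
  have e1: "- p*p + q*q = -1" and e2: "q * cosh a = p * sinh a" and p: "p > 0"
    using h assms by (auto simp: n mink_def algebra_simps)
  have c: "cosh a * cosh a = sinh a * sinh a + 1" using cosh_square_eq[of a] by (simp add: power2_eq_square)
  have "(q * cosh a) * (q * cosh a) = (p * sinh a) * (p * sinh a)" using e2 by simp
  hence "q*q * (cosh a * cosh a) = p*p*(sinh a * sinh a)" by (simp add: algebra_simps)
  moreover have qq: "q*q = p*p - 1" using e1 by simp
  ultimately have "(p*p - 1) * (cosh a * cosh a) = p*p*(sinh a * sinh a)" by simp
  hence "p*p*(cosh a * cosh a - sinh a * sinh a) = cosh a * cosh a" by (simp add: algebra_simps)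
  hence "p * p = cosh a * cosh a" using c by simp
  hence "p^2 = (cosh a)^2" by (simp add: power2_eq_square)
  hence pc: "p = cosh a" by (rule power2_eq_imp_eq) (use p in auto)
  hence "q = sinh a" using e2 by simp
  thus "n = (cosh a, sinh a)" using pc n by simp
qed

lemma curve_from_theta:
  assumes l: "l > 0"
    and g: "\<And>s. (\<gamma> has_vector_derivative (l * sinh (th s), l * cosh (th s))) (at s)"
    and th: "\<And>s. (th has_real_derivative l * \<tau> s) (at s)"
  shows "curve_data l \<tau> \<gamma>"
proof -
  have v: "vel \<gamma> = (\<lambda>s. (l * sinh (th s), l * cosh (th s)))"
    unfolding vel_def by (rule ext, rule vector_derivative_at[OF g])
  have dv: "((\<lambda>s. (l * sinh (th s), l * cosh (th s))) has_vector_derivative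
      (l * (l * \<tau> s) * cosh (th s), l * (l * \<tau> s) * sinh (th s))) (at s)" for s
  proof (rule has_vector_derivative_Pair)
    show "((\<lambda>s. l * sinh (th s)) has_vector_derivative l * (l * \<tau> s) * cosh (th s)) (at s)"
      unfolding has_real_derivative_iff_has_vector_derivative[symmetric]
      using DERIV_cmult[OF has_field_derivative_sinh[OF th], of l] by (simp add: algebra_simps)
    show "((\<lambda>s. l * cosh (th s)) has_vector_derivative l * (l * \<tau> s) * sinh (th s)) (at s)"
      unfolding has_real_derivative_iff_has_vector_derivative[symmetric]
      using DERIV_cmult[OF has_field_derivative_cosh[OF th], of l] by (simp add: algebra_simps)
  qed
  have a: "acc \<gamma> s = (l * (l * \<tau> s) * cosh (th s), l * (l * \<tau> s) * sinh (th s))" for s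
    unfolding acc_def v by (rule vector_derivative_at[OF dv])
  show ?thesis
    unfolding curve_data_def
  proof (intro allI conjI)
    fix s
    have c: "cosh (th s) * cosh (th s) - sinh (th s) * sinh (th s) = 1"
      using cosh_square_eq[of "th s"] by (simp add: power2_eq_square)
    have "mink (vel \<gamma> s) (vel \<gamma> s) = l^2 * (cosh (th s) * cosh (th s) - sinh (th s) * sinh (th s))"
      unfolding v mink_def by (simp add: power2_eq_square algebra_simps)
    then show "mink (vel \<gamma> s) (vel \<gamma> s) = l^2" by (simp only: c mult_1_right)
    thus "mink (vel \<gamma> s) (vel \<gamma> s) > 0" using l by simp
    have "- mink (cosh (th s), sinh (th s)) (acc \<gamma> s) = \<tau> s * l^2 * (cosh (th s) * cosh (th s) - sinh (th s) * sinh (th s))"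
      unfolding a mink_def by (simp add: power2_eq_square algebra_simps)
    thus "- mink (fut_unit_normal (vel \<gamma> s)) (acc \<gamma> s) = \<tau> s * l^2"
      unfolding v normal_eq[OF l] c by (simp only: mult_1_right)
  qed
qed


lemma antideriv:
  fixes f :: "real \<Rightarrow> real"
  assumes "\<And>x. isCont f x"
  obtains F where "\<And>x. (F has_real_derivative f x) (at x)"
proof -
  from einterval_antiderivative[of "-\<infinity>" "\<infinity>" f] assms
  obtain F where "\<forall>x. (F has_vector_derivative f x) (at x)" by auto
  then show ?thesis using that by (auto simp: has_real_derivative_iff_has_vector_derivative)
qed

lemma const_shift:
  fixes F f :: "real \<Rightarrow> real"
  assumes F: "\<And>x. (F has_real_derivative f x) (at x)" and p: "\<And>x. f (x + 1) = c * f x"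
  shows "F (x + 1) - c * F x = F 1 - c * F 0"
proof -
  have "\<forall>x. ((\<lambda>x. F (x + 1) - c * F x) has_real_derivative 0) (at x)"
  proof
    fix x
    have "((\<lambda>x. F (x + 1)) has_real_derivative f (x + 1)) (at x)"
      using F[of "x+1"] DERIV_shift by blast
    hence "((\<lambda>x. F (x + 1) - c * F x) has_real_derivative f (x + 1) - c * f x) (at x)"
      using F by (intro DERIV_diff DERIV_cmult) auto
    thus "((\<lambda>x. F (x + 1) - c * F x) has_real_derivative 0) (at x)" using p by simp
  qed
  from DERIV_isconst_all[OF this, of x 0] show ?thesis by simp
qed

lemma deriv_strict_mono:
  fixes F f :: "real \<Rightarrow> real"
  assumes F: "\<And>x. (F has_real_derivative f x) (at x)" and p: "\<And>x. f x > 0"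
  shows "strict_mono F"
  unfolding strict_mono_def
  using DERIV_pos_imp_increasing F p by blast

lemma shift_mult:
  fixes u :: "real \<Rightarrow> real"
  assumes h: "\<And>x. u (x + 1) = exp P * u x"
  shows "u (x + of_int m) = exp (of_int m * P) * u x"
proof -
  have nat: "u (x + real n) = exp (real n * P) * u x" for n x
  proof (induction n arbitrary: x)
    case 0 then show ?case by simp
  next
    case (Suc n)
    have "u (x + real (Suc n)) = u ((x + real n) + 1)" by (simp add: algebra_simps)
    also have "\<dots> = exp P * (exp (real n * P) * u x)" using h Suc by simp
    also have "\<dots> = exp (real (Suc n) * P) * u x"
      by (simp add: distrib_right exp_add)
    finally show ?case .
  qed
  show ?thesis
  proof (cases m rule: int_cases)
    case (nonneg n)
    then show ?thesis using nat[of x n] by simp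
  next
    case (neg n)
    have "u x = u ((x - real (Suc n)) + real (Suc n))" by simp
    also have "\<dots> = exp (real (Suc n) * P) * u (x - real (Suc n))" by (rule nat)
    finally have h1: "u x = exp (real (Suc n) * P) * u (x - real (Suc n))" .
    have e: "exp (- (real (Suc n) * P)) * exp (real (Suc n) * P) = 1"
      by (simp add: exp_add[symmetric])
    have "exp (- (real (Suc n) * P)) * u x = (exp (- (real (Suc n) * P)) * exp (real (Suc n) * P)) * u (x - real (Suc n))"
      by (subst h1) (simp only: mult.assoc)
    hence c: "u (x - real (Suc n)) = exp (- (real (Suc n) * P)) * u x" unfolding e by simp
    have mm: "real_of_int m = - real (Suc n)" using neg by simp
    have a1: "x + real_of_int m = x - real (Suc n)" and a2: "real_of_int m * P = - (real (Suc n) * P)"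
      unfolding mm by (simp_all add: algebra_simps)
    show ?thesis unfolding a1 a2 by (rule c)
  qed
qed

lemma shift_add:
  fixes u :: "real \<Rightarrow> real"
  assumes h: "\<And>x. u (x + 1) = u x + L"
  shows "u (x + of_int m) = u x + of_int m * L"
proof -
  have nat: "u (x + real n) = u x + real n * L" for n x
  proof (induction n arbitrary: x)
    case 0 then show ?case by simp
  next
    case (Suc n)
    have "u (x + real (Suc n)) = u ((x + real n) + 1)" by (simp add: algebra_simps)
    also have "\<dots> = u x + real n * L + L" using h Suc by simp
    finally show ?case by (simp add: algebra_simps)
  qed
  show ?thesis
  proof (cases m rule: int_cases)
    case (nonneg n)
    then show ?thesis using nat[of x n] by simp
  next
    case (neg n)
    have "u x = u ((x - real (Suc n)) + real (Suc n))" by simp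
    also have "\<dots> = u (x - real (Suc n)) + real (Suc n) * L" by (rule nat)
    finally have calc: "u (x - real (Suc n)) = u x - real (Suc n) * L" by simp
    have xm: "x + of_int m = x - real (Suc n)" using neg by simp
    have mm: "real_of_int m = - real (Suc n)" using neg by simp
    have a2: "real_of_int m * L = - (real (Suc n) * L)" unfolding mm by (simp add: algebra_simps)
    show ?thesis unfolding xm a2 calc by simp
  qed
qed

lemma boost_u: "fst (boost a p) + snd (boost a p) = exp a * (fst p + snd p)"
  unfolding boost_def by (simp add: cosh_plus_sinh[symmetric] algebra_simps)


lemma kasner_case:
  fixes \<tau> F :: "real \<Rightarrow> real" and Dt :: "nat \<Rightarrow> real \<Rightarrow> real"
  assumes l: "l > 0"
    and Dt: "\<And>n x. (Dt n has_real_derivative Dt (Suc n) x) (at x)"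
    and Dt0: "Dt 0 = \<tau>"
    and F: "\<And>x. (F has_real_derivative \<tau> x) (at x)"
    and Fp: "\<And>x. F (x + 1) = F x + M"
    and M: "M \<noteq> 0"
  shows "\<exists>\<gamma>. kasner_embedding (l * M) \<gamma> \<and> curve_data l \<tau> \<gamma>"
proof -
  define P where "P = l * M"
  have P0: "P \<noteq> 0" using l M by (simp add: P_def)
  define th where "th x = l * F x" for x
  have th: "(th has_real_derivative l * Dt 0 x) (at x)" for x
    unfolding th_def Dt0 by (intro DERIV_cmult F)
  have thp: "th (x + 1) = th x + P" for x
    unfolding th_def P_def Fp by (simp add: algebra_simps)
  have contE: "isCont (\<lambda>x. l * exp (th x)) x" for x
    using th by (intro continuous_intros DERIV_isCont) auto
  have contG: "isCont (\<lambda>x. l * exp (- th x)) x" for x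
    using th by (intro continuous_intros DERIV_isCont) auto
  obtain E where E: "\<And>x. (E has_real_derivative l * exp (th x)) (at x)"
    using antideriv[OF contE] by blast
  obtain G where G: "\<And>x. (G has_real_derivative l * exp (- th x)) (at x)"
    using antideriv[OF contG] by blast
  have c1: "E (x + 1) - exp P * E x = E 1 - exp P * E 0" for x
    by (rule const_shift[OF E]) (simp add: thp exp_add)
  have c2: "G (x + 1) - exp (-P) * G x = G 1 - exp (-P) * G 0" for x
  proof (rule const_shift[OF G])
    fix x
    have "exp (- th (x+1)) = exp (-P) * exp (- th x)" unfolding thp by (simp add: exp_add[symmetric] algebra_simps)
    thus "l * exp (- th (x + 1)) = exp (- P) * (l * exp (- th x))" by simp
  qed
  have eP1: "exp P \<noteq> 1" using P0 by simp
  have eM1: "exp (-P) \<noteq> 1" using P0 by simp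
  define a where "a = (E 1 - exp P * E 0) / (exp P - 1)"
  define b where "b = (G 1 - exp (-P) * G 0) / (1 - exp (-P))"
  define u where "u x = E x + a" for x
  define w where "w x = b - G x" for x
  have up: "u (x + 1) = exp P * u x" for x
  proof -
    have "a * (exp P - 1) = E 1 - exp P * E 0" unfolding a_def using eP1 by simp
    then show ?thesis unfolding u_def using c1[of x] by (simp add: algebra_simps)
  qed
  have wp: "w (x + 1) = exp (-P) * w x" for x
  proof -
    have "b * (1 - exp (-P)) = G 1 - exp (-P) * G 0" unfolding b_def using eM1 by simp
    then show ?thesis unfolding w_def using c2[of x] by (simp add: algebra_simps)
  qed
  have uD: "(u has_real_derivative l * exp (th x)) (at x)" for x
    unfolding u_def using E by (auto intro!: derivative_eq_intros)
  have wD: "(w has_real_derivative - (l * exp (- th x))) (at x)" for x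
    unfolding w_def using G by (auto intro!: derivative_eq_intros)
  have umono: "strict_mono u" by (rule deriv_strict_mono[OF uD]) (use l in simp)
  have Gmono: "strict_mono G" by (rule deriv_strict_mono[OF G]) (use l in simp)
  have wdec: "w y < w x" if "x < y" for x y
    using strict_monoD[OF Gmono that] unfolding w_def by simp
  define \<gamma> where "\<gamma> x = ((u x + w x) / 2, (u x - w x) / 2)" for x
  have gu: "fst (\<gamma> x) + snd (\<gamma> x) = u x" for x unfolding \<gamma>_def by (simp add: field_simps)
  have gD: "(\<gamma> has_vector_derivative (l * sinh (th x), l * cosh (th x))) (at x)" for x
  proof -
    have "((\<lambda>x. (u x + w x) / 2) has_real_derivative l * sinh (th x)) (at x)"
      using uD[of x] wD[of x] by (auto intro!: derivative_eq_intros simp: sinh_r field_simps)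
    moreover have "((\<lambda>x. (u x - w x) / 2) has_real_derivative l * cosh (th x)) (at x)"
      using uD[of x] wD[of x] by (auto intro!: derivative_eq_intros simp: cosh_r field_simps)
    ultimately show ?thesis unfolding \<gamma>_def has_real_derivative_iff_has_vector_derivative
      by (rule has_vector_derivative_Pair)
  qed
  have curve: "curve_data l \<tau> \<gamma>"
    by (rule curve_from_theta[OF l gD]) (use th Dt0 in simp)
  have sm1: "smooth (\<lambda>x. (u x + w x) / 2)"
  proof (rule smooth_from_deriv)
    show "((\<lambda>x. (u x + w x) / 2) has_vector_derivative (l/2) * exp (th x) + (- l/2) * exp (- th x)) (at x)" for x
      unfolding has_real_derivative_iff_has_vector_derivative[symmetric]
      using uD[of x] wD[of x] by (auto intro!: derivative_eq_intros simp: field_simps)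
    show "smooth (\<lambda>x. (l/2) * exp (th x) + (- l/2) * exp (- th x))"
      by (rule alg_smooth[OF Dt th]) (intro alg.add alg.mult alg.const alg.ep alg.em)
  qed
  have sm2: "smooth (\<lambda>x. (u x - w x) / 2)"
  proof (rule smooth_from_deriv)
    show "((\<lambda>x. (u x - w x) / 2) has_vector_derivative (l/2) * exp (th x) + (l/2) * exp (- th x)) (at x)" for x
      unfolding has_real_derivative_iff_has_vector_derivative[symmetric]
      using uD[of x] wD[of x] by (auto intro!: derivative_eq_intros simp: field_simps)
    show "smooth (\<lambda>x. (l/2) * exp (th x) + (l/2) * exp (- th x))"
      by (rule alg_smooth[OF Dt th]) (intro alg.add alg.mult alg.const alg.ep alg.em)
  qed
  have smooth: "smooth \<gamma>"
    unfolding \<gamma>_def[abs_def] by (rule smooth_pair[OF sm1 sm2])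
  have pos: "\<gamma> x \<in> (if P > 0 then Iplus else Iminus)" for x
  proof (cases "P > 0")
    case True
    have ux: "u x > 0"
    proof (rule ccontr)
      assume "\<not> u x > 0"
      hence n: "u x \<le> 0" by simp
      have lt: "u (x - 1) < u x" using strict_monoD[OF umono, of "x - 1" x] by simp
      have eq: "u x = exp P * u (x - 1)" using up[of "x - 1"] by simp
      have "(exp P - 1) * u (x - 1) \<le> 0"
        using True lt n by (intro mult_nonneg_nonpos) auto
      thus False using eq lt by (simp add: algebra_simps)
    qed
    have wx: "w x > 0"
    proof (rule ccontr)
      assume "\<not> w x > 0"
      hence n: "w x \<le> 0" by simp
      have lt: "w (x + 1) < w x" using wdec[of x "x + 1"] by simp
      have "(1 - exp (-P)) * w x \<le> 0"
        using True n by (intro mult_nonneg_nonpos) auto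
      thus False using wp[of x] lt by (simp add: algebra_simps)
    qed
    show ?thesis using True ux wx unfolding \<gamma>_def Iplus_def by auto
  next
    case False
    hence Pn: "P < 0" using P0 by simp
    have ux: "u x < 0"
    proof (rule ccontr)
      assume "\<not> u x < 0"
      hence n: "u x \<ge> 0" by simp
      have lt: "u x < u (x + 1)" using strict_monoD[OF umono, of x "x + 1"] by simp
      have "(1 - exp P) * u x \<ge> 0"
        using Pn n by (intro mult_nonneg_nonneg) auto
      thus False using up[of x] lt by (simp add: algebra_simps)
    qed
    have wx: "w x < 0"
    proof (rule ccontr)
      assume "\<not> w x < 0"
      hence n: "w x \<ge> 0" by simp
      have lt: "w x < w (x - 1)" using wdec[of "x - 1" x] by simp
      have eq: "w x = exp (-P) * w (x - 1)" using wp[of "x - 1"] by simp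
      have "(exp (-P) - 1) * w (x - 1) \<ge> 0"
        using Pn lt n by (intro mult_nonneg_nonneg) auto
      thus False using eq lt by (simp add: algebra_simps)
    qed
    have "\<gamma> x \<in> Iminus" using ux wx unfolding \<gamma>_def Iminus_def by (auto simp: abs_less_iff field_simps)
    thus ?thesis using False by simp
  qed
  have equi: "\<gamma> (x + 1) = boost (of_int 1 * P) (\<gamma> x)" for x
  proof -
    have e: "exp (-P) * exp P = 1" by (simp add: exp_minus)
    show ?thesis
      unfolding \<gamma>_def boost_def up wp cosh_r sinh_r
      by (simp add: field_simps exp_minus)
  qed
  have inj: "x - x' \<in> \<int>" if "\<exists>m::int. \<gamma> x = boost (of_int m * P) (\<gamma> x')" for x x'
  proof -
    from that obtain m :: int where m: "\<gamma> x = boost (of_int m * P) (\<gamma> x')" by blast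
    have "u x = exp (of_int m * P) * u x'"
      using boost_u[of "of_int m * P" "\<gamma> x'"] unfolding m[symmetric] gu .
    also have "\<dots> = u (x' + of_int m)" using shift_mult[of u P x' m] up by simp
    finally have "x = x' + of_int m" using strict_mono_eq[OF umono] by blast
    thus ?thesis by simp
  qed
  have vel: "vel \<gamma> x \<noteq> 0" for x
    unfolding vel_def vector_derivative_at[OF gD] using l by (simp add: zero_prod_def)
  have "kasner_embedding P \<gamma>"
    unfolding kasner_embedding_def
    using smooth pos equi inj vel by blast
  thus ?thesis using curve unfolding P_def by blast
qed


lemma cyl_case:
  fixes \<tau> F :: "real \<Rightarrow> real" and Dt :: "nat \<Rightarrow> real \<Rightarrow> real"
  assumes l: "l > 0"
    and Dt: "\<And>n x. (Dt n has_real_derivative Dt (Suc n) x) (at x)"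
    and Dt0: "Dt 0 = \<tau>"
    and F: "\<And>x. (F has_real_derivative \<tau> x) (at x)"
    and Fp: "\<And>x. F (x + 1) = F x"
  shows "\<exists>L>0. \<exists>\<gamma>. cylinder_embedding L \<gamma> \<and> curve_data l \<tau> \<gamma>"
proof -
  define ph where "ph x = l * F x" for x
  have ph: "(ph has_real_derivative l * Dt 0 x) (at x)" for x
    unfolding ph_def Dt0 by (intro DERIV_cmult F)
  have php: "ph (x + 1) = ph x" for x
    unfolding ph_def Fp by simp
  have contE: "isCont (\<lambda>x. exp (ph x)) x" for x
    using ph by (intro continuous_intros DERIV_isCont) auto
  have contG: "isCont (\<lambda>x. exp (- ph x)) x" for x
    using ph by (intro continuous_intros DERIV_isCont) auto
  obtain E where E: "\<And>x. (E has_real_derivative exp (ph x)) (at x)"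
    using antideriv[OF contE] by blast
  obtain G where G: "\<And>x. (G has_real_derivative exp (- ph x)) (at x)"
    using antideriv[OF contG] by blast
  have c1: "E (x + 1) = E x + (E 1 - E 0)" for x
    using const_shift[OF E, of 1 x] php by simp
  have c2: "G (x + 1) = G x + (G 1 - G 0)" for x
    using const_shift[OF G, of 1 x] php by simp
  define dE where "dE = E 1 - E 0"
  define dG where "dG = G 1 - G 0"
  have dE: "dE > 0" unfolding dE_def
    using strict_monoD[OF deriv_strict_mono[OF E], of 0 1] by simp
  have dG: "dG > 0" unfolding dG_def
    using strict_monoD[OF deriv_strict_mono[OF G], of 0 1] by simp
  define c where "c = sqrt (dG / dE)"
  have c0: "c > 0" unfolding c_def using dE dG by simp
  have cc: "c * c * dE = dG" unfolding c_def using dE dG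
    by (simp add: real_sqrt_mult[symmetric])
  define t where "t x = l / 2 * (c * E x - G x / c)" for x
  define y where "y x = l / 2 * (c * E x + G x / c)" for x
  define L where "L = l / 2 * (c * dE + dG / c)"
  have L0: "L > 0" unfolding L_def using l c0 dE dG by (intro mult_pos_pos add_pos_pos divide_pos_pos) auto
  have tp: "t (x + 1) = t x" for x
    unfolding t_def c1 c2 dE_def[symmetric] dG_def[symmetric] cc[symmetric] using c0
    by (simp add: field_simps)
  have yp: "y (x + 1) = y x + L" for x
    unfolding y_def L_def c1 c2 dE_def[symmetric] dG_def[symmetric] by (simp add: algebra_simps add_divide_distrib)
  define th where "th x = ln c + ph x" for x
  have th: "(th has_real_derivative l * \<tau> x) (at x)" for x
    unfolding th_def using ph[of x] Dt0 by (auto intro!: derivative_eq_intros)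
  have eth: "exp (th x) = c * exp (ph x)" for x unfolding th_def using c0 by (simp add: exp_add)
  have emth: "exp (- th x) = exp (- ph x) / c" for x unfolding th_def using c0
    by (simp add: exp_diff exp_minus field_simps)
  have tD: "(t has_real_derivative (l/2*c) * exp (ph x) + (- l/(2*c)) * exp (- ph x)) (at x)" for x
    unfolding t_def using E[of x] G[of x] c0 by (auto intro!: derivative_eq_intros simp: field_simps)
  have yD: "(y has_real_derivative (l/2*c) * exp (ph x) + (l/(2*c)) * exp (- ph x)) (at x)" for x
    unfolding y_def using E[of x] G[of x] c0 by (auto intro!: derivative_eq_intros simp: field_simps)
  have ts: "(l/2*c) * exp (ph x) + (- l/(2*c)) * exp (- ph x) = l * sinh (th x)" for x
    unfolding sinh_r eth emth using c0 by (simp add: field_simps)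
  have yc: "(l/2*c) * exp (ph x) + (l/(2*c)) * exp (- ph x) = l * cosh (th x)" for x
    unfolding cosh_r eth emth using c0 by (simp add: field_simps)
  define \<gamma> where "\<gamma> x = (t x, y x)" for x
  have gD: "(\<gamma> has_vector_derivative (l * sinh (th x), l * cosh (th x))) (at x)" for x
    unfolding \<gamma>_def[abs_def] using tD[of x] yD[of x]
    unfolding ts yc has_real_derivative_iff_has_vector_derivative
    by (rule has_vector_derivative_Pair)
  have curve: "curve_data l \<tau> \<gamma>"
    by (rule curve_from_theta[OF l gD th])
  have smooth: "smooth \<gamma>"
    unfolding \<gamma>_def[abs_def]
  proof (rule smooth_pair)
    show "smooth t"
      by (rule smooth_from_deriv[OF tD[unfolded has_real_derivative_iff_has_vector_derivative]],
          rule alg_smooth[OF Dt ph]) (intro alg.add alg.mult alg.const alg.ep alg.em)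
    show "smooth y"
      by (rule smooth_from_deriv[OF yD[unfolded has_real_derivative_iff_has_vector_derivative]],
          rule alg_smooth[OF Dt ph]) (intro alg.add alg.mult alg.const alg.ep alg.em)
  qed
  have ymono: "strict_mono y"
    by (rule deriv_strict_mono[OF yD]) (use l c0 in \<open>intro add_pos_pos mult_pos_pos; simp\<close>)
  have equi: "\<gamma> (x + 1) = \<gamma> x + (0, of_int 1 * L)" for x
    unfolding \<gamma>_def using tp yp by simp
  have inj: "x - x' \<in> \<int>" if "\<exists>m::int. \<gamma> x = \<gamma> x' + (0, of_int m * L)" for x x'
  proof -
    from that obtain m :: int where m: "\<gamma> x = \<gamma> x' + (0, of_int m * L)" by blast
    have "y x = y x' + of_int m * L" using m unfolding \<gamma>_def by simp
    also have "\<dots> = y (x' + of_int m)" using shift_add[of y L x' m] yp by simp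
    finally have "x = x' + of_int m" using strict_mono_eq[OF ymono] by blast
    thus ?thesis by simp
  qed
  have vel: "vel \<gamma> x \<noteq> 0" for x
    unfolding vel_def vector_derivative_at[OF gD] using l by (simp add: zero_prod_def)
  have "cylinder_embedding L \<gamma>"
    unfolding cylinder_embedding_def using smooth equi inj vel by blast
  thus ?thesis using curve L0 by blast
qed

theorem proposition5p1:
  fixes \<tau> :: "real \<Rightarrow> real" and l :: real
  assumes "smooth \<tau>" and "\<forall>s. \<tau> (s + 1) = \<tau> s" and "l > 0"
  shows "(mean_S1 \<tau> \<noteq> 0 \<longrightarrow>
            (\<exists>\<gamma>. kasner_embedding (l * mean_S1 \<tau>) \<gamma> \<and> curve_data l \<tau> \<gamma>))
       \<and> (mean_S1 \<tau> = 0 \<longrightarrow>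
            (\<exists>L>0. \<exists>\<gamma>. cylinder_embedding L \<gamma> \<and> curve_data l \<tau> \<gamma>))"
proof -
  obtain D where D0: "D 0 = \<tau>" and DD: "\<And>n x. (D n has_vector_derivative D (Suc n) x) (at x)"
    using assms(1) unfolding smooth_def by blast
  have Dt: "\<And>n x. (D n has_real_derivative D (Suc n) x) (at x)"
    using DD by (simp add: has_real_derivative_iff_has_vector_derivative)
  have cont: "isCont \<tau> x" for x using Dt[of 0 x] D0 DERIV_isCont by blast
  obtain F where F: "\<And>x. (F has_real_derivative \<tau> x) (at x)"
    using antideriv[OF cont] by blast
  have mean: "mean_S1 \<tau> = F 1 - F 0"
  proof -
    have "(\<tau> has_integral (F 1 - F 0)) {0..1}"
      by (rule fundamental_theorem_of_calculus)
        (auto intro: has_field_derivative_at_within[OF F] simp: has_real_derivative_iff_has_vector_derivative[symmetric])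
    thus ?thesis unfolding mean_S1_def by (rule integral_unique)
  qed
  have Fp: "F (x + 1) = F x + mean_S1 \<tau>" for x
    using const_shift[OF F, of 1 x] assms(2) mean by simp
  show ?thesis
  proof (intro conjI impI)
    assume "mean_S1 \<tau> \<noteq> 0"
    then show "\<exists>\<gamma>. kasner_embedding (l * mean_S1 \<tau>) \<gamma> \<and> curve_data l \<tau> \<gamma>"
      by (intro kasner_case[OF assms(3) Dt D0 F Fp])
  next
    assume "mean_S1 \<tau> = 0"
    then show "\<exists>L>0. \<exists>\<gamma>. cylinder_embedding L \<gamma> \<and> curve_data l \<tau> \<gamma>"
      using Fp by (intro cyl_case[OF assms(3) Dt D0 F]) simp
  qed
qed

end
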